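(* Consider a single-stage screening process with two groups $A,B$ and a test satisfying $\tau_{X1}>\tau_{X0}\ge0$ for $X\in\{A,B\}$. The interview efficiency of any policy satisfying Equalized Odds (with positive true positive rate) is at most $$\frac{1}{1+\frac{u_A+u_B}{q_A+q_B}\cdot\max\left(\frac{\tau_{A0}}{\tau_{A1}},\frac{\tau_{B0}}{\tau_{B1}}\right)}.$$
   Context: Group $X$ has base rate $q_X$ and $u_X=1-q_X$; $\tau_{X1}$ (resp. $\tau_{X0}$) is the probability a qualified (resp. unqualified) member of $X$ passes the test. A policy specifies $\pi_{X1},\pi_{X0}\in[0,1]$, the promotion probabilities after passing (resp. failing). Let $M_X=\tau_{X1}\pi_{X1}+(1-\tau_{X1})\pi_{X0}$ and $N_X=\tau_{X0}\pi_{X1}+(1-\tau_{X0})\pi_{X0}$. The policy satisfies Equalized Odds if $M_A=M_B=:M$ and $N_A=N_B=:N$; its interview efficiency is then $\frac{(q_A+q_B)M}{(q_A+q_B)M+(u_A+u_B)N}$. *)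

theory Defs
  imports Complex_Main
begin

text \<open>Promotion probability of a qualified member (M_X) and of an unqualified
member (N_X) of a group with pass probabilities tau1 (qualified), tau0 (unqualified),
under policy (pi1, pi0).\<close>
definition Mrate :: "real \<Rightarrow> real \<Rightarrow> real \<Rightarrow> real" where
  "Mrate tau1 pi1 pi0 = tau1 * pi1 + (1 - tau1) * pi0"

definition Nrate :: "real \<Rightarrow> real \<Rightarrow> real \<Rightarrow> real" where
  "Nrate tau0 pi1 pi0 = tau0 * pi1 + (1 - tau0) * pi0"

definition is_policy :: "real \<Rightarrow> real \<Rightarrow> bool" where
  "is_policy pi1 pi0 \<longleftrightarrow> 0 \<le> pi1 \<and> pi1 \<le> 1 \<and> 0 \<le> pi0 \<and> pi0 \<le> 1"

definition equalized_odds ::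
  "real \<Rightarrow> real \<Rightarrow> real \<Rightarrow> real \<Rightarrow> real \<Rightarrow> real \<Rightarrow> real \<Rightarrow> real \<Rightarrow> bool" where
  "equalized_odds tA1 tA0 tB1 tB0 piA1 piA0 piB1 piB0 \<longleftrightarrow>
     Mrate tA1 piA1 piA0 = Mrate tB1 piB1 piB0 \<and> Nrate tA0 piA1 piA0 = Nrate tB0 piB1 piB0"

definition interview_efficiency :: "real \<Rightarrow> real \<Rightarrow> real \<Rightarrow> real \<Rightarrow> real" where
  "interview_efficiency qA qB M N =
     (qA + qB) * M / ((qA + qB) * M + ((1 - qA) + (1 - qB)) * N)"

end

theory Submission
  imports Defs
begin

theorem mainTheorem17:
  fixes qA qB tA1 tA0 tB1 tB0 piA1 piA0 piB1 piB0 :: real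
  assumes qA: "0 \<le> qA" "qA \<le> 1" and qB: "0 \<le> qB" "qB \<le> 1" and qpos: "0 < qA + qB"
    and tA: "0 \<le> tA0" "tA0 < tA1" "tA1 \<le> 1"
    and tB: "0 \<le> tB0" "tB0 < tB1" "tB1 \<le> 1"
    and polA: "is_policy piA1 piA0" and polB: "is_policy piB1 piB0"
    and eo: "equalized_odds tA1 tA0 tB1 tB0 piA1 piA0 piB1 piB0"
    and tpr: "Mrate tA1 piA1 piA0 > 0"
  shows "interview_efficiency qA qB (Mrate tA1 piA1 piA0) (Nrate tA0 piA1 piA0)
           \<le> 1 / (1 + (((1 - qA) + (1 - qB)) / (qA + qB)) * max (tA0 / tA1) (tB0 / tB1))"
proof -
  define M where "M = Mrate tA1 piA1 piA0"
  define N where "N = Nrate tA0 piA1 piA0"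
  define Q where "Q = qA + qB"
  define U where "U = (1 - qA) + (1 - qB)"
  define r where "r = max (tA0 / tA1) (tB0 / tB1)"
  have M: "M > 0" using tpr M_def by simp
  have MB: "M = Mrate tB1 piB1 piB0" and NB: "N = Nrate tB0 piB1 piB0"
    using eo unfolding equalized_odds_def M_def N_def by auto
  have hA: "tA0 / tA1 * M \<le> N"
  proof -
    have "N * tA1 - M * tA0 = piA0 * (tA1 - tA0)"
      unfolding M_def N_def Mrate_def Nrate_def by (simp add: algebra_simps)
    moreover have "piA0 * (tA1 - tA0) \<ge> 0" using polA tA unfolding is_policy_def by simp
    ultimately have "M * tA0 \<le> N * tA1" by simp
    thus ?thesis using tA by (simp add: field_simps)
  qed
  have hB: "tB0 / tB1 * M \<le> N"
  proof -
    have "N * tB1 - M * tB0 = piB0 * (tB1 - tB0)"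
      unfolding MB NB Mrate_def Nrate_def by (simp add: algebra_simps)
    moreover have "piB0 * (tB1 - tB0) \<ge> 0" using polB tB unfolding is_policy_def by simp
    ultimately have "M * tB0 \<le> N * tB1" by simp
    thus ?thesis using tB by (simp add: field_simps)
  qed
  have rM: "r * M \<le> N" using hA hB unfolding r_def by (simp add: max_def)
  have r0: "r \<ge> 0" unfolding r_def using tA by (simp add: le_max_iff_disj)
  have Q: "Q > 0" using qpos Q_def by simp
  have U: "U \<ge> 0" using qA qB U_def by simp
  have N0: "N \<ge> 0" using rM r0 M by (meson mult_nonneg_nonneg less_imp_le order_trans)
  have "Q * M / (Q * M + U * N) \<le> Q / (Q + U * r)"
  proof -
    have d1: "Q * M + U * N > 0" using Q M U N0 by (simp add: add_pos_nonneg)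
    have d2: "Q + U * r > 0" using Q U r0 by (simp add: add_pos_nonneg)
    have "Q * M * (Q + U * r) \<le> Q * (Q * M + U * N)"
    proof -
      have "U * (r * M) \<le> U * N" using rM U by (simp add: mult_left_mono)
      hence "Q * (U * (r * M)) \<le> Q * (U * N)" using Q by (simp add: mult_left_mono)
      thus ?thesis by (simp add: algebra_simps)
    qed
    thus ?thesis using d1 d2 by (simp add: divide_simps)
  qed
  also have "Q / (Q + U * r) = 1 / (1 + U / Q * r)" using Q by (simp add: field_simps)
  finally show ?thesis unfolding interview_efficiency_def M_def N_def Q_def U_def r_def .
qed

end
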